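(* Let $k\ge1$, let $A,B$ be disjoint $n$-element sets, and let $\mathcal S$ be a semi-intersecting family with parameters $n$ and $k$ on base sets $A,B$. If $|\mathcal S|>2k^3$, then either every element of $A$ has degree at most $k$ in $\mathcal S$, or every element of $B$ has degree at most $k$ in $\mathcal S$.
   Context: A semi-intersecting family with parameters $n,k$ on disjoint $n$-element base sets $A,B$ is a family $\mathcal S$ of subsets of $A\cup B$ with $|S\cap A|=|S\cap B|=k$ for every $S\in\mathcal S$, such that any two distinct $S,T\in\mathcal S$ satisfy exactly one of $S\cap T\cap A=\emptyset$, $S\cap T\cap B=\emptyset$. The degree of a vertex $v$ in $\mathcal S$ is the number of members of $\mathcal S$ containing $v$. *)

theory Defs
  imports Main
begin

definition semi_intersecting ::
  "nat \<Rightarrow> nat \<Rightarrow> 'a set \<Rightarrow> 'a set \<Rightarrow> 'a set set \<Rightarrow> bool" where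
  "semi_intersecting n k A B \<S> \<longleftrightarrow>
     finite A \<and> finite B \<and> card A = n \<and> card B = n \<and> A \<inter> B = {} \<and>
     (\<forall>S\<in>\<S>. S \<subseteq> A \<union> B \<and> card (S \<inter> A) = k \<and> card (S \<inter> B) = k) \<and>
     (\<forall>S\<in>\<S>. \<forall>T\<in>\<S>. S \<noteq> T \<longrightarrow>
        ((S \<inter> T \<inter> A = {}) \<noteq> (S \<inter> T \<inter> B = {})))"

definition degree :: "'a set set \<Rightarrow> 'a \<Rightarrow> nat" where
  "degree \<S> v = card {S \<in> \<S>. v \<in> S}"

end

theory Submission
  imports Defs
begin

lemma card_ins_aux: "finite M \<Longrightarrow> card (insert x M) \<le> card M + 1"
  by (simp add: card_insert_if)

lemma si_swap:
  "semi_intersecting n k A B \<S> \<Longrightarrow> semi_intersecting n k B A \<S>"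
  unfolding semi_intersecting_def by blast

lemma si_unique:
  assumes "semi_intersecting n k A B \<S>" "S \<in> \<S>" "T \<in> \<S>"
    "x \<in> S" "x \<in> T" "x \<in> A" "y \<in> S" "y \<in> T" "y \<in> B"
  shows "S = T"
  using assms unfolding semi_intersecting_def by blast

lemma si_pair_count:
  assumes si: "semi_intersecting n k A B \<S>" and fin: "finite \<S>"
    and P: "P \<subseteq> A" "finite P" and Q: "Q \<subseteq> B" "finite Q"
  shows "card {S\<in>\<S>. S \<inter> P \<noteq> {} \<and> S \<inter> Q \<noteq> {}} \<le> card P * card Q"
proof -
  let ?C = "{S\<in>\<S>. S \<inter> P \<noteq> {} \<and> S \<inter> Q \<noteq> {}}"
  define f where "f S = (SOME x. x \<in> S \<inter> P, SOME y. y \<in> S \<inter> Q)" for S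
  have fx: "fst (f S) \<in> S \<inter> P" "snd (f S) \<in> S \<inter> Q" if "S \<in> ?C" for S
  proof -
    from that obtain x y where xy: "x \<in> S \<inter> P" "y \<in> S \<inter> Q" by blast
    show "fst (f S) \<in> S \<inter> P" unfolding f_def fst_conv
      by (rule someI[of "\<lambda>x. x \<in> S \<inter> P", OF xy(1)])
    show "snd (f S) \<in> S \<inter> Q" unfolding f_def snd_conv
      by (rule someI[of "\<lambda>x. x \<in> S \<inter> Q", OF xy(2)])
  qed
  have "inj_on f ?C"
  proof
    fix S T assume S: "S \<in> ?C" and T: "T \<in> ?C" and e: "f S = f T"
    show "S = T"
      using si_unique[OF si, of S T "fst (f S)" "snd (f S)"] fx[OF S] fx[OF T] e P Q S T
      by auto
  qed
  moreover have "f ` ?C \<subseteq> P \<times> Q"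
  proof
    fix z assume "z \<in> f ` ?C"
    then obtain S where "S \<in> ?C" "z = f S" by blast
    then show "z \<in> P \<times> Q" using fx[of S] by (simp add: mem_Times_iff)
  qed
  ultimately have "card ?C \<le> card (P \<times> Q)"
    by (meson card_inj_on_le finite_SigmaI P(2) Q(2))
  thus ?thesis by (simp add: card_cartesian_product)
qed

lemma si_cover:
  assumes si: "semi_intersecting n k A B \<S>" and fin: "finite \<S>" and k: "k \<ge> 1"
    and a: "a \<in> A" and deg: "degree \<S> a > k"
  shows "\<exists>X. X \<subseteq> A \<and> finite X \<and> card X \<le> k^2 \<and> (\<forall>S\<in>\<S>. S \<inter> X \<noteq> {})"
proof -
  have finA: "finite A" and disj: "A \<inter> B = {}" using si unfolding semi_intersecting_def by auto
  have cards: "\<And>S. S \<in> \<S> \<Longrightarrow> card (S \<inter> A) = k \<and> card (S \<inter> B) = k \<and> S \<subseteq> A \<union> B"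
    using si unfolding semi_intersecting_def by auto
  have fa: "finite {S\<in>\<S>. a \<in> S}" using fin by simp
  have "k + 1 \<le> card {S\<in>\<S>. a \<in> S}" using deg unfolding degree_def by simp
  then obtain F where F: "F \<subseteq> {S\<in>\<S>. a \<in> S}" "card F = k + 1"
    using obtain_subset_with_card_n by (metis (no_types, lifting))
  have finF: "finite F" using F fa finite_subset by blast
  define X where "X = insert a (\<Union>U\<in>F. U \<inter> A - {a})"
  have XA: "X \<subseteq> A" using a unfolding X_def by auto
  have finX: "finite X" using XA finA finite_subset by blast
  have "card (\<Union>U\<in>F. U \<inter> A - {a}) \<le> (\<Sum>U\<in>F. card (U \<inter> A - {a}))"
    by (rule card_UN_le[OF finF])
  also have "\<dots> = (\<Sum>U\<in>F. k - 1)"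
  proof (rule sum.cong)
    fix U assume "U \<in> F"
    then have "U \<in> \<S>" "a \<in> U" using F by auto
    then show "card (U \<inter> A - {a}) = k - 1" using cards a
      by (simp add: card_Diff_singleton_if)
  qed simp
  also have "\<dots> = (k+1)*(k-1)" using F by simp
  finally have cM: "card (\<Union>U\<in>F. U \<inter> A - {a}) \<le> (k+1)*(k-1)" .
  have "finite (\<Union>U\<in>F. U \<inter> A - {a})" using finA finF by auto
  then have "card X \<le> card (\<Union>U\<in>F. U \<inter> A - {a}) + 1"
    unfolding X_def by (rule card_ins_aux)
  then have "card X \<le> 1 + (k+1)*(k-1)" using cM by linarith
  also have "1 + (k+1)*(k-1) = k^2" using k
    by (cases k) (auto simp: power2_eq_square)
  finally have cX: "card X \<le> k^2" .
  have cover: "S \<inter> X \<noteq> {}" if S: "S \<in> \<S>" for S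
  proof (cases "S \<in> F")
    case True then show ?thesis using F unfolding X_def by auto
  next
    case False
    have "\<exists>U\<in>F. S \<inter> U \<inter> B = {}"
    proof (rule ccontr)
      assume "\<not> ?thesis"
      then have ne: "\<forall>U\<in>F. S \<inter> U \<inter> B \<noteq> {}" by blast
      define g where "g U = (SOME y. y \<in> S \<inter> U \<inter> B)" for U
      have g: "g U \<in> S \<inter> U \<inter> B" if "U \<in> F" for U
        using ne that unfolding g_def by (metis ex_in_conv someI_ex)
      have "inj_on g F"
      proof
        fix U V assume U: "U \<in> F" and V: "V \<in> F" and "g U = g V"
        then show "U = V"
          using si_unique[OF si, of U V a "g U"] g[OF U] g[OF V] F a by auto
      qed
      moreover have "g ` F \<subseteq> S \<inter> B" using g by auto
      ultimately have "card F \<le> card (S \<inter> B)"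
        using card_inj_on_le cards[OF S] card.infinite k by (metis not_one_le_zero)
      then show False using F cards[OF S] by simp
    qed
    then obtain U where U: "U \<in> F" "S \<inter> U \<inter> B = {}" by blast
    have "U \<in> \<S>" "S \<noteq> U" using U F False by auto
    then have "S \<inter> U \<inter> A \<noteq> {}" using si S U unfolding semi_intersecting_def by blast
    then show ?thesis using U unfolding X_def by blast
  qed
  show ?thesis using XA finX cX cover by blast
qed

theorem lemma2p2:
  fixes A B :: "'a set" and \<S> :: "'a set set" and n k :: nat
  assumes "k \<ge> 1"
    and "finite A" and "finite B" and "card A = n" and "card B = n" and "A \<inter> B = {}"
    and "semi_intersecting n k A B \<S>"
    and "card \<S> > 2 * k ^ 3"
  shows "(\<forall>v\<in>A. degree \<S> v \<le> k) \<or> (\<forall>v\<in>B. degree \<S> v \<le> k)"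
proof (rule ccontr)
  assume "\<not> ?thesis"
  then obtain a b where a: "a \<in> A" "degree \<S> a > k" and b: "b \<in> B" "degree \<S> b > k"
    by (auto simp: not_le)
  note si = assms(7)
  have fin: "finite \<S>" using assms(8) card.infinite by fastforce
  obtain X where X: "X \<subseteq> A" "finite X" "card X \<le> k^2" "\<forall>S\<in>\<S>. S \<inter> X \<noteq> {}"
    using si_cover[OF si fin assms(1) a] by blast
  obtain Y where Y: "Y \<subseteq> B" "finite Y" "card Y \<le> k^2" "\<forall>S\<in>\<S>. S \<inter> Y \<noteq> {}"
    using si_cover[OF si_swap[OF si] fin assms(1) b] by blast
  have "\<S> \<noteq> {}" using assms(8) by auto
  then obtain T where T: "T \<in> \<S>" by blast
  have cT: "card (T \<inter> A) = k" "card (T \<inter> B) = k" "finite (T \<inter> A)" "finite (T \<inter> B)"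
    using si T assms(2,3) unfolding semi_intersecting_def by auto
  have cov: "\<S> \<subseteq> {S\<in>\<S>. S \<inter> (T \<inter> A) \<noteq> {} \<and> S \<inter> Y \<noteq> {}}
      \<union> {S\<in>\<S>. S \<inter> X \<noteq> {} \<and> S \<inter> (T \<inter> B) \<noteq> {}}"
  proof
    fix S assume S: "S \<in> \<S>"
    have "S \<inter> T \<inter> A \<noteq> {} \<or> S \<inter> T \<inter> B \<noteq> {}"
    proof (cases "S = T")
      case True
      then show ?thesis using cT assms(1) by auto
    next
      case False
      then show ?thesis using si S T unfolding semi_intersecting_def by blast
    qed
    then show "S \<in> {S\<in>\<S>. S \<inter> (T \<inter> A) \<noteq> {} \<and> S \<inter> Y \<noteq> {}}
      \<union> {S\<in>\<S>. S \<inter> X \<noteq> {} \<and> S \<inter> (T \<inter> B) \<noteq> {}}"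
      using S X(4) Y(4) by blast
  qed
  have c1: "card {S\<in>\<S>. S \<inter> (T \<inter> A) \<noteq> {} \<and> S \<inter> Y \<noteq> {}} \<le> k * k^2"
  proof -
    have "card {S\<in>\<S>. S \<inter> (T \<inter> A) \<noteq> {} \<and> S \<inter> Y \<noteq> {}} \<le> card (T \<inter> A) * card Y"
      by (rule si_pair_count[OF si fin _ cT(3) Y(1,2)]) blast
    also have "\<dots> \<le> k * k^2" using cT(1) Y(3) by simp
    finally show ?thesis .
  qed
  have c2: "card {S\<in>\<S>. S \<inter> X \<noteq> {} \<and> S \<inter> (T \<inter> B) \<noteq> {}} \<le> k^2 * k"
  proof -
    have "card {S\<in>\<S>. S \<inter> X \<noteq> {} \<and> S \<inter> (T \<inter> B) \<noteq> {}} \<le> card X * card (T \<inter> B)"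
      by (rule si_pair_count[OF si fin X(1,2) _ cT(4)]) blast
    also have "\<dots> \<le> k^2 * k" using cT(2) X(3) by simp
    finally show ?thesis .
  qed
  have "card \<S> \<le> card {S\<in>\<S>. S \<inter> (T \<inter> A) \<noteq> {} \<and> S \<inter> Y \<noteq> {}}
      + card {S\<in>\<S>. S \<inter> X \<noteq> {} \<and> S \<inter> (T \<inter> B) \<noteq> {}}"
    by (rule order_trans[OF card_mono[OF _ cov] card_Un_le]) (use fin in auto)
  also have "\<dots> \<le> 2 * k^3" using c1 c2 by (simp add: power3_eq_cube power2_eq_square)
  finally show False using assms(8) by simp
qed

end
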